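(* Let $\pi=\pi_1\cdots\pi_n$ be a permutation of $\{1,\dots,n\}$. The Schröder insertion tableau $P(\pi)$ has a single column (i.e. every row of $P(\pi)$ has at most $2$ cells) if and only if $\pi$ avoids both patterns $123$ and $213$.
   Context: A Schröder tableau consists of rows $1,2,\dots$; row $r$ has $\lambda_r$ cells at positions $1,\dots,\lambda_r$, each filled with a number; cells at odd positions are upper triangles, at even positions lower triangles, and positions $2m-1,2m$ form the $m$-th square column. The Schröder insertion tableau $P(\pi)$ is built as follows. Start with $P$ having one row containing $\pi_1$. For $k=2,\dots,n$, insert $\alpha=\pi_k$ into row $i=1$ by the rule: if row $i$ is empty or $\alpha$ is larger than all its entries, place $\alpha$ in a new cell at the end of row $i$ and stop. Otherwise let $j$ be the position in row $i$ of the smallest entry larger than $\alpha$. If $j$ is even: remove the entry $\beta$ at position $j$, write $\alpha$ there, and insert $\beta$ into row $i+1$ by the same rule. If $j$ is odd and position $j+1$ exists in row $i$ with entry $\beta$: move the entry of position $j$ to position $j+1$, write $\alpha$ at position $j$, and insert $\beta$ into row $i+1$. If $j$ is odd and is the last position of row $i$: move the entry of position $j$ into a new cell at position $j+1$ at the end of row $i$, write $\alpha$ at position $j$, and stop. A permutation $\tau$ contains a pattern $\sigma$ of length $k$ if some subsequence $\tau_{i_1}\cdots\tau_{i_k}$ ($i_1<\dots<i_k$) is order-isomorphic to $\sigma$; otherwise it avoids $\sigma$. *)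

theory Defs
  imports Main "HOL-Combinatorics.Multiset_Permutations"
begin

text \<open>The entry at (1-based) position p of a row is stored at list index p - 1.
  So 1-based position j is even iff the 0-based index j - 1 is odd.\<close>

type_synonym row = "nat list"
type_synonym stableau = "row list"

definition smallest_larger_idx :: "nat \<Rightarrow> row \<Rightarrow> nat" where
  "smallest_larger_idx a r =
     (THE k. k < length r \<and> r ! k = Min {x \<in> set r. a < x})"

fun sinsert :: "nat \<Rightarrow> stableau \<Rightarrow> stableau" where
  "sinsert a [] = [[a]]"
| "sinsert a (r # rs) =
     (if r = [] \<or> (\<forall>x\<in>set r. x < a) then (r @ [a]) # rs
      else (let k = smallest_larger_idx a r in
        if odd k then
          \<comment> \<open>1-based position k+1 is even: bump r!k into next row\<close>
          r[k := a] # sinsert (r ! k) rs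
        else if Suc k < length r then
          \<comment> \<open>odd position with a following cell: shift, bump r!(k+1)\<close>
          r[k := a, Suc k := r ! k] # sinsert (r ! Suc k) rs
        else
          \<comment> \<open>odd position, last cell: shift into a new cell, stop\<close>
          (r[k := a] @ [r ! k]) # rs))"

definition schroeder_P :: "nat list \<Rightarrow> stableau" where
  "schroeder_P \<pi> = (case \<pi> of [] \<Rightarrow> [] | x # xs \<Rightarrow> foldl (\<lambda>T a. sinsert a T) [[x]] xs)"

definition contains_pattern :: "nat list \<Rightarrow> nat list \<Rightarrow> bool" where
  "contains_pattern \<tau> \<sigma> \<longleftrightarrow>
     (\<exists>idx :: nat \<Rightarrow> nat. strict_mono_on {..<length \<sigma>} idx \<and>
        (\<forall>i<length \<sigma>. idx i < length \<tau>) \<and>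
        (\<forall>i<length \<sigma>. \<forall>j<length \<sigma>. \<sigma> ! i < \<sigma> ! j \<longleftrightarrow> \<tau> ! idx i < \<tau> ! idx j))"

definition avoids :: "nat list \<Rightarrow> nat list \<Rightarrow> bool" where
  "avoids \<tau> \<sigma> \<longleftrightarrow> \<not> contains_pattern \<tau> \<sigma>"

end

theory Submission
  imports Defs
begin

fun chunks :: "nat list \<Rightarrow> nat list list" where
  "chunks [] = []"
| "chunks [a] = [[a]]"
| "chunks (a # b # r) = [a, b] # chunks r"

lemma chunks_len: "r \<in> set (chunks s) \<Longrightarrow> length r \<le> 2"
  by (induction s rule: chunks.induct) auto

lemma two_cases: "k < (2::nat) \<Longrightarrow> k = 0 \<or> k = 1" by auto

lemma sli1: "x < a \<Longrightarrow> a < y \<Longrightarrow> smallest_larger_idx a [x, y] = 1"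
proof -
  assume h: "x < a" "a < y"
  have "{z \<in> set [x, y]. a < z} = {y}" using h by auto
  then have m: "Min {z \<in> set [x, y]. a < z} = y" by simp
  show ?thesis unfolding smallest_larger_idx_def m
  proof (rule the_equality)
    show "1 < length [x, y] \<and> [x, y] ! 1 = y" by simp
  next
    fix k assume k: "k < length [x, y] \<and> [x, y] ! k = y"
    then have "k = 0 \<or> k = 1" using two_cases by simp
    then show "k = 1" using k h by auto
  qed
qed

lemma sli0: "a < x \<Longrightarrow> x < y \<Longrightarrow> smallest_larger_idx a [x, y] = 0"
proof -
  assume h: "a < x" "x < y"
  have "{z \<in> set [x, y]. a < z} = {x, y}" using h by auto
  moreover have "Min {x, y} = x" using h by simp
  ultimately have m: "Min {z \<in> set [x, y]. a < z} = x" by simp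
  show ?thesis unfolding smallest_larger_idx_def m
  proof (rule the_equality)
    show "0 < length [x, y] \<and> [x, y] ! 0 = x" by simp
  next
    fix k assume k: "k < length [x, y] \<and> [x, y] ! k = x"
    then have "k = 0 \<or> k = 1" using two_cases by simp
    then show "k = 0" using k h by auto
  qed
qed

lemma sli0': "a < x \<Longrightarrow> smallest_larger_idx a [x] = 0"
proof -
  assume h: "a < x"
  have "{z \<in> set [x]. a < z} = {x}" using h by auto
  then show ?thesis unfolding smallest_larger_idx_def
    using h by (intro the_equality) auto
qed

lemma ins_chunks:
  "sorted_wrt (<) s \<Longrightarrow> a \<notin> set s \<Longrightarrow> (2 \<le> length s \<longrightarrow> a < s ! 1)
   \<Longrightarrow> sinsert a (chunks s) = chunks (insort a s)"
proof (induction s arbitrary: a rule: chunks.induct)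
  case 1
  then show ?case by simp
next
  case (2 x)
  then show ?case
    by (cases "x < a") (auto simp: sli0')
next
  case (3 x y r)
  have xy: "x < y" and yr: "\<forall>z\<in>set r. y < z" and xr: "\<forall>z\<in>set r. x < z"
    and sr: "sorted_wrt (<) r" using "3.prems"(1) by auto
  have ay: "a < y" using "3.prems"(3) by simp
  have yn: "y \<notin> set r" using yr by auto
  have c1: "2 \<le> length r \<longrightarrow> y < r ! 1" using yr by auto
  have ih: "sinsert y (chunks r) = chunks (insort y r)"
    using "3.IH" sr yn c1 by blast
  have iy: "insort y r = y # r"
  proof (cases r)
    case Nil then show ?thesis by simp
  next
    case (Cons z zs) then show ?thesis using yr by simp
  qed
  have nall: "\<not> (\<forall>z\<in>set [x, y]. z < a)" using ay by auto
  show ?case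
  proof (cases "x < a")
    case True
    then show ?thesis using nall ih iy ay xy by (simp add: sli1)
  next
    case False
    then have "a < x" using "3.prems"(2) by auto
    then show ?thesis using nall ih iy ay xy by (simp add: sli0)
  qed
qed


lemma sinsert_cons_cases:
  "(\<exists>q' rs'. sinsert a (q # rs) = q' # rs' \<and> length q \<le> length q' \<and>
      (rs' = rs \<or> (\<exists>b. rs' = sinsert b rs)))"
proof -
  define k where "k = smallest_larger_idx a q"
  show ?thesis
  proof (cases "q = [] \<or> (\<forall>x\<in>set q. x < a)")
    case True
    then show ?thesis by simp
  next
    case False
    then have e: "sinsert a (q # rs) = (if odd k then q[k := a] # sinsert (q ! k) rs
          else if Suc k < length q then q[k := a, Suc k := q ! k] # sinsert (q ! Suc k) rs
          else (q[k := a] @ [q ! k]) # rs)"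
      unfolding k_def by (simp only: sinsert.simps Let_def if_False)
    show ?thesis unfolding e by auto
  qed
qed

lemma mono_rows:
  "r \<in> set T \<Longrightarrow> 3 \<le> length r \<Longrightarrow> \<exists>r' \<in> set (sinsert a T). 3 \<le> length r'"
proof (induction T arbitrary: a)
  case Nil
  then show ?case by simp
next
  case (Cons q rs)
  obtain q' rs' where e: "sinsert a (q # rs) = q' # rs'" "length q \<le> length q'"
    "rs' = rs \<or> (\<exists>b. rs' = sinsert b rs)"
    using sinsert_cons_cases by blast
  show ?case
  proof (cases "r = q")
    case True
    then show ?thesis using Cons.prems e by auto
  next
    case False
    then have "r \<in> set rs" using Cons.prems by simp
    then show ?thesis using Cons.IH Cons.prems(2) e by auto
  qed
qed

definition good :: "nat list \<Rightarrow> bool" where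
  "good p \<longleftrightarrow> (\<forall>k<length p. \<forall>u\<in>set (take k p). \<forall>v\<in>set (take k p).
      u < p ! k \<longrightarrow> v < p ! k \<longrightarrow> u = v)"

lemma good_snoc:
  "good (l @ [a]) \<longleftrightarrow> good l \<and> (\<forall>u\<in>set l. \<forall>v\<in>set l. u < a \<longrightarrow> v < a \<longrightarrow> u = v)"
  unfolding good_def
  apply (auto simp: nth_append less_Suc_eq)
  done


lemma sort_snoc: "sort (l @ [a]) = insort a (sort l)"
  by (rule properties_for_sort) (simp_all add: sorted_insort)

lemma main_lemma:
  "distinct (x # xs) \<Longrightarrow>
   (good (x # xs) \<and> foldl (\<lambda>T a. sinsert a T) [[x]] xs = chunks (sort (x # xs))) \<or>
   (\<not> good (x # xs) \<and> (\<exists>r\<in>set (foldl (\<lambda>T a. sinsert a T) [[x]] xs). 3 \<le> length r))"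
proof (induction xs rule: rev_induct)
  case Nil
  then show ?case by (simp add: good_def)
next
  case (snoc a xs)
  define l where "l = x # xs"
  define F where "F = foldl (\<lambda>T a. sinsert a T) [[x]] xs"
  have dl: "distinct l" and al: "a \<notin> set l" using snoc.prems unfolding l_def by auto
  have fe: "foldl (\<lambda>T a. sinsert a T) [[x]] (xs @ [a]) = sinsert a F" unfolding F_def by simp
  have l2: "x # xs @ [a] = l @ [a]" unfolding l_def by simp
  have IH: "(good l \<and> F = chunks (sort l)) \<or> (\<not> good l \<and> (\<exists>r\<in>set F. 3 \<le> length r))"
    using snoc.IH dl unfolding l_def F_def by simp
  show ?case unfolding fe l2
  proof (cases "good l")
    case False
    then obtain r where "r \<in> set F" "3 \<le> length r" using IH by auto
    then show "(good (l @ [a]) \<and> sinsert a F = chunks (sort (l @ [a]))) \<or>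
      (\<not> good (l @ [a]) \<and> (\<exists>r\<in>set (sinsert a F). 3 \<le> length r))"
      using mono_rows False good_snoc by blast
  next
    case True
    then have Fe: "F = chunks (sort l)" using IH by auto
    have ss: "sorted_wrt (<) (sort l)" using dl by (simp add: strict_sorted_iff)
    show "(good (l @ [a]) \<and> sinsert a F = chunks (sort (l @ [a]))) \<or>
      (\<not> good (l @ [a]) \<and> (\<exists>r\<in>set (sinsert a F). 3 \<le> length r))"
    proof (cases "\<forall>u\<in>set l. \<forall>v\<in>set l. u < a \<longrightarrow> v < a \<longrightarrow> u = v")
      case True
      have c: "2 \<le> length (sort l) \<longrightarrow> a < sort l ! 1"
      proof
        assume len: "2 \<le> length (sort l)"
        then obtain s0 s1 rest where se: "sort l = s0 # s1 # rest"
          by (metis One_nat_def Suc_1 Suc_le_length_iff)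
        have "s0 \<in> set l" "s1 \<in> set l" using se by (metis list.set_intros set_sort)+
        moreover have "s0 < s1" using ss se by simp
        moreover have "s1 \<noteq> a" using al \<open>s1 \<in> set l\<close> by auto
        ultimately show "a < sort l ! 1" using True se by force
      qed
      have "sinsert a F = chunks (sort (l @ [a]))"
        unfolding Fe sort_snoc using ins_chunks[OF ss _ c] al by simp
      then show ?thesis using True \<open>good l\<close> good_snoc by blast
    next
      case False
      then obtain u v where uv: "u \<in> set l" "v \<in> set l" "u < a" "v < a" "u \<noteq> v" by blast
      have "2 \<le> length (sort l)"
      proof -
        have "card {u, v} \<le> card (set l)" using uv by (intro card_mono) auto
        then have "2 \<le> length l" using uv card_length[of l] by simp
        then show ?thesis by simp
      qed
      then obtain s0 s1 rest where se: "sort l = s0 # s1 # rest"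
        by (metis One_nat_def Suc_1 Suc_le_length_iff)
      have sl: "set (s0 # s1 # rest) = set l" using se by (metis set_sort)
      have ge: "\<And>w. w \<in> set l \<Longrightarrow> w \<noteq> s0 \<Longrightarrow> s1 \<le> w"
      proof -
        fix w assume "w \<in> set l" "w \<noteq> s0"
        then have "w \<in> set (s1 # rest)" using sl by auto
        then show "s1 \<le> w" using ss se by auto
      qed
      have "s1 < a" using ge uv by (metis le_less_trans)
      moreover have "s0 < s1" using ss se by simp
      ultimately have "sinsert a F = [s0, s1, a] # chunks rest"
        unfolding Fe se by simp
      then have "\<exists>r\<in>set (sinsert a F). 3 \<le> length r" by simp
      then show ?thesis using False good_snoc by blast
    qed
  qed
qed


definition triple :: "nat list \<Rightarrow> bool" where
  "triple p \<longleftrightarrow> (\<exists>i j k. i < j \<and> j < k \<and> k < length p \<and> p ! i < p ! k \<and> p ! j < p ! k)"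

lemma good_triple: "distinct p \<Longrightarrow> good p \<longleftrightarrow> \<not> triple p"
proof
  assume d: "distinct p" and g: "good p"
  show "\<not> triple p"
  proof
    assume "triple p"
    then obtain i j k where t: "i < j" "j < k" "k < length p" "p ! i < p ! k" "p ! j < p ! k"
      unfolding triple_def by blast
    have mi: "p ! i \<in> set (take k p)" unfolding in_set_conv_nth using t
      by (intro exI[of _ i]) auto
    have mj: "p ! j \<in> set (take k p)" unfolding in_set_conv_nth using t
      by (intro exI[of _ j]) auto
    have ne: "p ! i \<noteq> p ! j" using d t by (simp add: nth_eq_iff_index_eq)
    have "p ! i = p ! j" using g t(3,4,5) mi mj unfolding good_def by blast
    then show False using ne by simp
  qed
next
  assume d: "distinct p" and nt: "\<not> triple p"
  show "good p" unfolding good_def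
  proof (intro allI impI ballI, rule ccontr)
    fix k u v assume k: "k < length p" and u: "u \<in> set (take k p)" and v: "v \<in> set (take k p)"
      and lu: "u < p ! k" and lv: "v < p ! k" and ne: "u \<noteq> v"
    obtain i where i: "i < k" "p ! i = u" using u k by (auto simp: in_set_conv_nth)
    obtain j where j: "j < k" "p ! j = v" using v k by (auto simp: in_set_conv_nth)
    have "i \<noteq> j" using i j ne by auto
    then have "i < j \<or> j < i" by auto
    then show False using nt i j k lu lv unfolding triple_def by blast
  qed
qed

lemma contains_triple:
  "distinct p \<Longrightarrow> (contains_pattern p [1,2,3] \<or> contains_pattern p [2,1,3]) \<longleftrightarrow> triple p"
proof
  assume "contains_pattern p [1,2,3] \<or> contains_pattern p [2,1,3]"
  then obtain idx :: "nat \<Rightarrow> nat" and \<sigma> :: "nat list" where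
    s: "\<sigma> = [1,2,3] \<or> \<sigma> = [2,1,3]" and
    m: "strict_mono_on {..<length \<sigma>} idx" and b: "\<forall>i<length \<sigma>. idx i < length p" and
    c: "\<forall>i<length \<sigma>. \<forall>j<length \<sigma>. \<sigma> ! i < \<sigma> ! j \<longleftrightarrow> p ! idx i < p ! idx j"
    unfolding contains_pattern_def by blast
  have l3: "length \<sigma> = 3" using s by auto
  have "idx 0 < idx 1" "idx 1 < idx 2" using m l3 by (auto simp: strict_mono_on_def)
  moreover have "idx 2 < length p" using b l3 by auto
  moreover have "p ! idx 0 < p ! idx 2" "p ! idx 1 < p ! idx 2"
    using c[rule_format, of 0 2] c[rule_format, of 1 2] l3 s by auto
  ultimately show "triple p" unfolding triple_def by blast
next
  assume d: "distinct p" and "triple p"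
  then obtain i j k where t: "i < j" "j < k" "k < length p" "p ! i < p ! k" "p ! j < p ! k"
    unfolding triple_def by blast
  have ne: "p ! i \<noteq> p ! j" using d t by (simp add: nth_eq_iff_index_eq)
  define idx where "idx = (\<lambda>t::nat. [i, j, k] ! t)"
  have m: "strict_mono_on {..<3} idx" using t
    by (auto simp: strict_mono_on_def idx_def less_Suc_eq numeral_3_eq_3)
  have b: "\<forall>t<3. idx t < length p" using t
    by (auto simp: idx_def less_Suc_eq numeral_3_eq_3)
  show "contains_pattern p [1,2,3] \<or> contains_pattern p [2,1,3]"
  proof (cases "p ! i < p ! j")
    case True
    have "contains_pattern p [1,2,3]" unfolding contains_pattern_def
      using m b t True
      by (intro exI[of _ idx]) (auto simp: idx_def less_Suc_eq numeral_3_eq_3)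
    then show ?thesis by blast
  next
    case False
    then have "p ! j < p ! i" using ne by auto
    then have "contains_pattern p [2,1,3]" unfolding contains_pattern_def
      using m b t
      by (intro exI[of _ idx]) (auto simp: idx_def less_Suc_eq numeral_3_eq_3)
    then show ?thesis by blast
  qed
qed

theorem mainTheorem9:
  fixes \<pi> :: "nat list" and n :: nat
  assumes "\<pi> \<in> permutations_of_set {1..n}"
  shows "(\<forall>row \<in> set (schroeder_P \<pi>). length row \<le> 2) \<longleftrightarrow>
         (avoids \<pi> [1,2,3] \<and> avoids \<pi> [2,1,3])"
proof -
  have d: "distinct \<pi>" using assms by (simp add: permutations_of_set_def)
  have rhs: "(avoids \<pi> [1,2,3] \<and> avoids \<pi> [2,1,3]) \<longleftrightarrow> good \<pi>"
    using contains_triple[OF d] good_triple[OF d] unfolding avoids_def by blast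
  show ?thesis unfolding rhs
  proof (cases \<pi>)
    case Nil
    then show "(\<forall>row \<in> set (schroeder_P \<pi>). length row \<le> 2) \<longleftrightarrow> good \<pi>"
      by (simp add: schroeder_P_def good_def)
  next
    case (Cons x xs)
    have P: "schroeder_P \<pi> = foldl (\<lambda>T a. sinsert a T) [[x]] xs"
      using Cons by (simp add: schroeder_P_def)
    from main_lemma[of x xs] d Cons
    show "(\<forall>row \<in> set (schroeder_P \<pi>). length row \<le> 2) \<longleftrightarrow> good \<pi>"
      unfolding P using chunks_len by force
  qed
qed

end
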